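(* Let $K\subseteq\mathcal I_{int}$ be finite, let $A=(Q,\mathsf{init},2^{\Sigma\cup K\cup\{\mathsf{anch}\}},\delta,F)$ be an NFA whose language consists of collapsed $K$-interval words over $\Sigma$, and let $\mathsf{seq}$ be a type over $K$. Then every word accepted by $A_{\mathsf{seq}}$ is a normalized word of type $\mathsf{seq}$, i.e. $L(A_{\mathsf{seq}})\subseteq\mathsf{Norm}(W_{\mathsf{seq}})$.
   Context: Fix a finite set $\Sigma$ of propositions; $\mathcal I_{int}$ is the set of open, half-open or closed real intervals with endpoints in $\mathbb Z\cup\{-\infty,\infty\}$. Interval words: for finite $K\subseteq\mathcal I_{int}$ and a fresh symbol $\mathsf{anch}$, a $K$-interval word over $\Sigma$ is a finite word $w=a_1\cdots a_n$ with $a_j\subseteq\Sigma\cup K\cup\{\mathsf{anch}\}$ such that exactly one position $i$, denoted $\mathsf{anch}(w)$, has $\mathsf{anch}\in a_i$, and $a_i\subseteq\Sigma\cup\{\mathsf{anch}\}$ there. Position $j$ is $I$-time restricted iff $I\in a_j$. $w$ is collapsed iff every $a_j$ contains at most one element of $K$. $\mathsf{first}(w,I)$, $\mathsf{last}(w,I)$ are the least and greatest $I$-time restricted positions ($\bot$ if none). For a collapsed $K$-interval word $w$, $\mathsf{Norm}(w)$ is the $K$-interval word $b_1\cdots b_n$ with $b_j\cap(\Sigma\cup\{\mathsf{anch}\})=a_j\cap(\Sigma\cup\{\mathsf{anch}\})$ and, for $I\in K$, $I\in b_j$ iff $j\in\{\mathsf{first}(w,I),\mathsf{last}(w,I)\}$;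 for a set $L$ of words, $\mathsf{Norm}(L)=\{\mathsf{Norm}(w):w\in L\}$. Types: for a collapsed $K$-interval word $w$, let $\mathsf{Boundary}(w)$ be the set of positions that are $\mathsf{anch}(w)$ or equal to $\mathsf{first}(w,I)$ or $\mathsf{last}(w,I)$ for some $I\in K$; listing them as $p_1<\dots<p_m$, the type of $w$ is the word $c_1\cdots c_m$ over $K\cup\{\mathsf{anch}\}$ where $c_k$ is the unique element of $a_{p_k}\setminus\Sigma$. A type over $K$ is any word over $K\cup\{\mathsf{anch}\}$ arising this way (it contains $\mathsf{anch}$ exactly once and each $I\in K$ at most twice). $W_{\mathsf{seq}}$ is the set of collapsed $K$-interval words of type $\mathsf{seq}$. The automaton $A_{\mathsf{seq}}$: for $A$ as in the claim and a type $\mathsf{seq}=c_1\cdots c_m$, $A_{\mathsf{seq}}=(Q\times\{1,\dots,m+1\},(\mathsf{init},1),2^{\Sigma\cup K\cup\{\mathsf{anch}\}},\delta_{\mathsf{seq}},F\times\{m+1\})$ where, for $q\in Q$ and a letter $S$: for $1\le i\le m$, (i) if $c_i\in S$ then $\delta_{\mathsf{seq}}((q,i),S)=\delta(q,S)\times\{i+1\}$; (ii) if $c_i\notin S$ and $S\not\subseteq\Sigma$ then $\delta_{\mathsf{seq}}((q,i),S)=\emptyset$; (iii) if $S\subseteq\Sigma$ then $\delta_{\mathsf{seq}}((q,i),S)=\big(\delta(q,S)\cup\bigcup_{I'\in K_i}\delta(q,S\cup\{I'\})\big)\times\{i\}$, where $K_i=\{I'\in K:\exists i'<i\le i''\text{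 with }c_{i'}=c_{i''}=I'\}$; and $\delta_{\mathsf{seq}}((q,m+1),S)=\delta(q,S)\times\{m+1\}$ if $S\subseteq\Sigma$ and $\emptyset$ otherwise. *)

theory Defs
  imports Complex_Main
begin

fun lower_ok :: "int option \<Rightarrow> bool \<Rightarrow> real \<Rightarrow> bool" where
  "lower_ok None _ x = True"
| "lower_ok (Some a) cl x = (if cl then real_of_int a \<le> x else real_of_int a < x)"

fun upper_ok :: "int option \<Rightarrow> bool \<Rightarrow> real \<Rightarrow> bool" where
  "upper_ok None _ x = True"
| "upper_ok (Some b) cl x = (if cl then x \<le> real_of_int b else x < real_of_int b)"

definition I_int :: "real set set" where
  "I_int = {I. \<exists>lo lc hi hc. I = {x. lower_ok lo lc x \<and> upper_ok hi hc x}}"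

datatype 'p sym = Prop 'p | Itv "real set" | Anch

definition alphabet :: "'p set \<Rightarrow> real set set \<Rightarrow> 'p sym set set" where
  "alphabet \<Sigma> K = Pow (Prop ` \<Sigma> \<union> Itv ` K \<union> {Anch})"

text \<open>Words are lists; positions are 0-based indices.\<close>

definition interval_word :: "'p set \<Rightarrow> real set set \<Rightarrow> 'p sym set list \<Rightarrow> bool" where
  "interval_word \<Sigma> K w \<longleftrightarrow>
     (\<forall>j<length w. w ! j \<subseteq> Prop ` \<Sigma> \<union> Itv ` K \<union> {Anch}) \<and>
     (\<exists>!i. i < length w \<and> Anch \<in> w ! i) \<and>
     (\<forall>i<length w. Anch \<in> w ! i \<longrightarrow> w ! i \<subseteq> Prop ` \<Sigma> \<union> {Anch})"

definition anch_pos :: "'p sym set list \<Rightarrow> nat" where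
  "anch_pos w = (THE i. i < length w \<and> Anch \<in> w ! i)"

definition collapsed :: "real set set \<Rightarrow> 'p sym set list \<Rightarrow> bool" where
  "collapsed K w \<longleftrightarrow> (\<forall>j<length w. card (w ! j \<inter> Itv ` K) \<le> 1)"

definition collapsed_iword :: "'p set \<Rightarrow> real set set \<Rightarrow> 'p sym set list \<Rightarrow> bool" where
  "collapsed_iword \<Sigma> K w \<longleftrightarrow> interval_word \<Sigma> K w \<and> collapsed K w"

definition restricted :: "'p sym set list \<Rightarrow> real set \<Rightarrow> nat set" where
  "restricted w I = {j. j < length w \<and> Itv I \<in> w ! j}"

definition first_pos :: "'p sym set list \<Rightarrow> real set \<Rightarrow> nat option" where
  "first_pos w I = (if restricted w I = {} then None else Some (Min (restricted w I)))"

definition last_pos :: "'p sym set list \<Rightarrow> real set \<Rightarrow> nat option" where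
  "last_pos w I = (if restricted w I = {} then None else Some (Max (restricted w I)))"

definition Norm :: "'p set \<Rightarrow> real set set \<Rightarrow> 'p sym set list \<Rightarrow> 'p sym set list" where
  "Norm \<Sigma> K w = map (\<lambda>j. (w ! j \<inter> (Prop ` \<Sigma> \<union> {Anch})) \<union>
        {Itv I | I. I \<in> K \<and> (first_pos w I = Some j \<or> last_pos w I = Some j)}) [0..<length w]"

definition Boundary :: "real set set \<Rightarrow> 'p sym set list \<Rightarrow> nat set" where
  "Boundary K w = {anch_pos w} \<union> {j. \<exists>I\<in>K. first_pos w I = Some j \<or> last_pos w I = Some j}"

definition type_of :: "'p set \<Rightarrow> real set set \<Rightarrow> 'p sym set list \<Rightarrow> 'p sym list" where
  "type_of \<Sigma> K w = map (\<lambda>p. the_elem (w ! p - Prop ` \<Sigma>)) (sorted_list_of_set (Boundary K w))"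

definition is_type :: "'p set \<Rightarrow> real set set \<Rightarrow> 'p sym list \<Rightarrow> bool" where
  "is_type \<Sigma> K seq \<longleftrightarrow> (\<exists>w. collapsed_iword \<Sigma> K w \<and> type_of \<Sigma> K w = seq)"

definition W_seq :: "'p set \<Rightarrow> real set set \<Rightarrow> 'p sym list \<Rightarrow> 'p sym set list set" where
  "W_seq \<Sigma> K seq = {w. collapsed_iword \<Sigma> K w \<and> type_of \<Sigma> K w = seq}"

definition nfa :: "'q set \<Rightarrow> 'q \<Rightarrow> 'a set \<Rightarrow> ('q \<Rightarrow> 'a \<Rightarrow> 'q set) \<Rightarrow> 'q set \<Rightarrow> bool" where
  "nfa Q init Alph \<delta> F \<longleftrightarrow> finite Q \<and> finite Alph \<and> init \<in> Q \<and> F \<subseteq> Q \<and>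
     (\<forall>q\<in>Q. \<forall>a\<in>Alph. \<delta> q a \<subseteq> Q)"

fun steps :: "('q \<Rightarrow> 'a \<Rightarrow> 'q set) \<Rightarrow> 'q set \<Rightarrow> 'a list \<Rightarrow> 'q set" where
  "steps \<delta> S [] = S"
| "steps \<delta> S (a # w) = steps \<delta> (\<Union>q\<in>S. \<delta> q a) w"

definition nfa_lang :: "'q \<Rightarrow> 'a set \<Rightarrow> ('q \<Rightarrow> 'a \<Rightarrow> 'q set) \<Rightarrow> 'q set \<Rightarrow> 'a list set" where
  "nfa_lang init Alph \<delta> F = {w. set w \<subseteq> Alph \<and> steps \<delta> {init} w \<inter> F \<noteq> {}}"

text \<open>Positions i of seq are 1-based here: c_i = seq ! (i - 1).\<close>

definition K_i :: "real set set \<Rightarrow> 'p sym list \<Rightarrow> nat \<Rightarrow> real set set" where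
  "K_i K seq i = {I'\<in>K. \<exists>i' i''. 1 \<le> i' \<and> i' < i \<and> i \<le> i'' \<and> i'' \<le> length seq \<and>
       seq ! (i' - 1) = Itv I' \<and> seq ! (i'' - 1) = Itv I'}"

definition delta_seq :: "'p set \<Rightarrow> real set set \<Rightarrow> 'p sym list \<Rightarrow> ('q \<Rightarrow> 'p sym set \<Rightarrow> 'q set)
     \<Rightarrow> 'q \<times> nat \<Rightarrow> 'p sym set \<Rightarrow> ('q \<times> nat) set" where
  "delta_seq \<Sigma> K seq \<delta> qi S = (case qi of (q, i) \<Rightarrow>
     if 1 \<le> i \<and> i \<le> length seq then
       (if seq ! (i - 1) \<in> S then \<delta> q S \<times> {i + 1}
        else if \<not> S \<subseteq> Prop ` \<Sigma> then {}
        else (\<delta> q S \<union> (\<Union>I'\<in>K_i K seq i. \<delta> q (S \<union> {Itv I'}))) \<times> {i})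
     else if i = length seq + 1 then
       (if S \<subseteq> Prop ` \<Sigma> then \<delta> q S \<times> {length seq + 1} else {})
     else {})"

end

theory Submission
  imports Defs
begin

lemma steps_mono: "S \<subseteq> T \<Longrightarrow> steps d S w \<subseteq> steps d T w"
proof (induction w arbitrary: S T)
  case Nil then show ?case by simp
next
  case (Cons a w)
  have "(\<Union>q\<in>S. d q a) \<subseteq> (\<Union>q\<in>T. d q a)" using Cons.prems by blast
  then show ?case using Cons.IH by simp
qed

lemma steps_split: "x \<in> steps d S w \<Longrightarrow> \<exists>s\<in>S. x \<in> steps d {s} w"
proof (induction w arbitrary: S)
  case Nil then show ?case by simp
next
  case (Cons a w)
  from Cons.prems have "x \<in> steps d (\<Union>q\<in>S. d q a) w" by simp
  then obtain s where s: "s \<in> (\<Union>q\<in>S. d q a)" "x \<in> steps d {s} w" using Cons.IH by blast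
  then obtain q where q: "q \<in> S" "s \<in> d q a" by blast
  have "steps d {s} w \<subseteq> steps d (d q a) w" using q steps_mono by (metis empty_subsetI insert_subset)
  then have "x \<in> steps d {q} (a # w)" using s by auto
  then show ?case using q by blast
qed

definition step_ok :: "'p set \<Rightarrow> real set set \<Rightarrow> 'p sym list \<Rightarrow> 'p sym set \<Rightarrow> 'p sym set \<Rightarrow> nat \<Rightarrow> nat \<Rightarrow> bool" where
  "step_ok \<Sigma> K seq a a' i i1 \<longleftrightarrow>
     (1 \<le> i \<and> i \<le> length seq \<and> seq ! (i - 1) \<in> a \<and> a' = a \<and> i1 = Suc i) \<or>
     (a \<subseteq> Prop ` \<Sigma> \<and> i1 = i \<and> (a' = a \<or> (\<exists>I'\<in>K_i K seq i. a' = a \<union> {Itv I'})))"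

lemma one_step:
  assumes "(q1, i1) \<in> delta_seq \<Sigma> K seq \<delta> (q0, i0) a"
  shows "\<exists>a'. q1 \<in> \<delta> q0 a' \<and> step_ok \<Sigma> K seq a a' i0 i1"
  using assms unfolding delta_seq_def step_ok_def
  by (auto split: if_splits)

lemma run_lemma:
  assumes "(qf, i_f) \<in> steps (delta_seq \<Sigma> K seq \<delta>) {(q0, i0)} w"
  shows "\<exists>w' g. length w' = length w \<and> qf \<in> steps \<delta> {q0} w' \<and> g 0 = i0 \<and> g (length w) = i_f \<and>
     (\<forall>j<length w. step_ok \<Sigma> K seq (w ! j) (w' ! j) (g j) (g (Suc j)))"
  using assms
proof (induction w arbitrary: q0 i0)
  case Nil
  then show ?case by (intro exI[of _ "[]"] exI[of _ "\<lambda>_. i0"]) auto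
next
  case (Cons a w)
  from Cons.prems have "(qf, i_f) \<in> steps (delta_seq \<Sigma> K seq \<delta>) (delta_seq \<Sigma> K seq \<delta> (q0, i0) a) w"
    by simp
  then obtain q1 i1 where s: "(q1, i1) \<in> delta_seq \<Sigma> K seq \<delta> (q0, i0) a"
    "(qf, i_f) \<in> steps (delta_seq \<Sigma> K seq \<delta>) {(q1, i1)} w"
    using steps_split by fastforce
  obtain a' where a': "q1 \<in> \<delta> q0 a'" "step_ok \<Sigma> K seq a a' i0 i1" using one_step[OF s(1)] by blast
  obtain w'' g' where ih: "length w'' = length w" "qf \<in> steps \<delta> {q1} w''" "g' 0 = i1"
    "g' (length w) = i_f" "\<forall>j<length w. step_ok \<Sigma> K seq (w ! j) (w'' ! j) (g' j) (g' (Suc j))"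
    using Cons.IH[OF s(2)] by blast
  define g where "g = (\<lambda>j. case j of 0 \<Rightarrow> i0 | Suc k \<Rightarrow> g' k)"
  have "steps \<delta> {q1} w'' \<subseteq> steps \<delta> (\<delta> q0 a') w''" using a'(1) steps_mono by (metis empty_subsetI insert_subset)
  then have "qf \<in> steps \<delta> {q0} (a' # w'')" using ih(2) by auto
  moreover have "\<forall>j<length (a # w). step_ok \<Sigma> K seq ((a # w) ! j) ((a' # w'') ! j) (g j) (g (Suc j))"
  proof (intro allI impI)
    fix j assume "j < length (a # w)"
    then show "step_ok \<Sigma> K seq ((a # w) ! j) ((a' # w'') ! j) (g j) (g (Suc j))"
      using a'(2) ih(3,5) by (cases j) (auto simp: g_def)
  qed
  ultimately show ?case using ih(1,4) by (intro exI[of _ "a' # w''"] exI[of _ g]) (auto simp: g_def)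
qed


lemma anch_pos_props:
  assumes "interval_word \<Sigma> K v"
  shows "anch_pos v < length v \<and> Anch \<in> v ! anch_pos v"
proof -
  have "\<exists>!i. i < length v \<and> Anch \<in> v ! i" using assms unfolding interval_word_def by blast
  then show ?thesis unfolding anch_pos_def by (rule theI')
qed

lemma anch_pos_unique:
  assumes "interval_word \<Sigma> K v" "i < length v" "Anch \<in> v ! i"
  shows "i = anch_pos v"
proof -
  have u: "\<exists>!i. i < length v \<and> Anch \<in> v ! i" using assms unfolding interval_word_def by blast
  then show ?thesis using anch_pos_props[OF assms(1)] assms(2,3) by blast
qed

lemma restricted_finite: "finite (restricted v I)"
  unfolding restricted_def by auto

lemma first_pos_in: "first_pos v I = Some j \<Longrightarrow> j \<in> restricted v I"
  unfolding first_pos_def by (auto split: if_splits intro: Min_in restricted_finite)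

lemma last_pos_in: "last_pos v I = Some j \<Longrightarrow> j \<in> restricted v I"
  unfolding last_pos_def by (auto split: if_splits intro: Max_in restricted_finite)

lemma letter_anch:
  assumes "collapsed_iword \<Sigma> K v" "p < length v" "Anch \<in> v ! p"
  shows "v ! p - Prop ` \<Sigma> = {Anch}"
  using assms unfolding collapsed_iword_def interval_word_def by auto

lemma letter_itv:
  assumes "collapsed_iword \<Sigma> K v" "p < length v" "Itv I \<in> v ! p" "I \<in> K" "finite K"
  shows "v ! p - Prop ` \<Sigma> = {Itv I}"
proof -
  have sub: "v ! p \<subseteq> Prop ` \<Sigma> \<union> Itv ` K \<union> {Anch}"
    and na: "Anch \<notin> v ! p"
    using assms unfolding collapsed_iword_def interval_word_def by auto
  have c: "card (v ! p \<inter> Itv ` K) \<le> 1" using assms unfolding collapsed_iword_def collapsed_def by auto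
  have f: "finite (v ! p \<inter> Itv ` K)" using assms(5) by auto
  have all: "\<forall>a1\<in>v ! p \<inter> Itv ` K. \<forall>a2\<in>v ! p \<inter> Itv ` K. a1 = a2"
    using c card_le_Suc0_iff_eq[OF f] by simp
  have "Itv I \<in> v ! p \<inter> Itv ` K" using assms(3,4) by blast
  then have "v ! p \<inter> Itv ` K = {Itv I}" using all by blast
  then show ?thesis using sub na by auto
qed

lemma boundary_letter:
  assumes "collapsed_iword \<Sigma> K v" "finite K" "p \<in> Boundary K v"
  shows "p < length v \<and> ((v ! p - Prop ` \<Sigma> = {Anch} \<and> p = anch_pos v) \<or>
     (\<exists>I\<in>K. v ! p - Prop ` \<Sigma> = {Itv I} \<and> (first_pos v I = Some p \<or> last_pos v I = Some p)))"
proof -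
  have iw: "interval_word \<Sigma> K v" using assms(1) unfolding collapsed_iword_def by blast
  from assms(3) consider "p = anch_pos v" | I where "I \<in> K" "first_pos v I = Some p \<or> last_pos v I = Some p"
    unfolding Boundary_def by blast
  then show ?thesis
  proof cases
    case 1
    then show ?thesis using anch_pos_props[OF iw] letter_anch[OF assms(1)] by auto
  next
    case 2
    then have "p \<in> restricted v I" using first_pos_in last_pos_in by blast
    then have "p < length v" "Itv I \<in> v ! p" unfolding restricted_def by auto
    then show ?thesis using letter_itv[OF assms(1) _ _ 2(1) assms(2)] 2 by blast
  qed
qed

lemma boundary_finite:
  assumes "collapsed_iword \<Sigma> K v" "finite K"
  shows "finite (Boundary K v)"
proof -
  have "Boundary K v \<subseteq> {..<length v}" using boundary_letter[OF assms] by auto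
  then show ?thesis using finite_subset by blast
qed

lemma type_set:
  assumes "is_type \<Sigma> K seq" "finite K"
  shows "set seq \<subseteq> {Anch} \<union> Itv ` K"
proof
  fix x assume x: "x \<in> set seq"
  obtain v where v: "collapsed_iword \<Sigma> K v" "type_of \<Sigma> K v = seq" using assms(1) unfolding is_type_def by blast
  from x v(2) obtain p where p: "p \<in> Boundary K v" "x = the_elem (v ! p - Prop ` \<Sigma>)"
    unfolding type_of_def using boundary_finite[OF v(1) assms(2)] by auto
  show "x \<in> {Anch} \<union> Itv ` K" using boundary_letter[OF v(1) assms(2) p(1)] p(2) by auto
qed

lemma type_card:
  assumes "is_type \<Sigma> K seq" "finite K"
  shows "card {i. i < length seq \<and> seq ! i = Itv I} \<le> 2"
proof -
  obtain v where v: "collapsed_iword \<Sigma> K v" "type_of \<Sigma> K v = seq" using assms(1) unfolding is_type_def by blast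
  define L where "L = sorted_list_of_set (Boundary K v)"
  have fB: "finite (Boundary K v)" using boundary_finite[OF v(1) assms(2)] .
  have sL: "set L = Boundary K v" "distinct L" using fB unfolding L_def by auto
  have seqL: "seq = map (\<lambda>p. the_elem (v ! p - Prop ` \<Sigma>)) L" using v(2) unfolding type_of_def L_def by simp
  define T where "T = {the (first_pos v I), the (last_pos v I)}"
  have img: "(\<lambda>i. L ! i) ` {i. i < length seq \<and> seq ! i = Itv I} \<subseteq> T"
  proof
    fix x assume "x \<in> (\<lambda>i. L ! i) ` {i. i < length seq \<and> seq ! i = Itv I}"
    then obtain i where i: "i < length L" "the_elem (v ! (L ! i) - Prop ` \<Sigma>) = Itv I" "x = L ! i"
      using seqL by auto
    have "L ! i \<in> Boundary K v" using i(1) sL(1) nth_mem by blast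
    from boundary_letter[OF v(1) assms(2) this] i(2)
    obtain J where "J \<in> K" "v ! (L ! i) - Prop ` \<Sigma> = {Itv J}" "first_pos v J = Some (L ! i) \<or> last_pos v J = Some (L ! i)"
      by auto
    then have "Itv J = Itv I" using i(2) by simp
    then have "J = I" by simp
    then show "x \<in> T" using \<open>first_pos v J = Some (L ! i) \<or> last_pos v J = Some (L ! i)\<close> i(3)
      unfolding T_def by force
  qed
  have lL: "length seq = length L" using seqL by simp
  have "inj_on (\<lambda>i. L ! i) {i. i < length seq \<and> seq ! i = Itv I}"
    unfolding inj_on_def lL using nth_eq_iff_index_eq[OF sL(2)] by blast
  then have "card {i. i < length seq \<and> seq ! i = Itv I} \<le> card T"
    by (rule card_inj_on_le) (use img in \<open>simp_all add: T_def\<close>)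
  also have "card T \<le> 2" unfolding T_def by (simp add: card_insert_if)
  finally show ?thesis .
qed


locale run_setting =
  fixes \<Sigma> :: "'p set" and K :: "real set set" and seq :: "'p sym list"
    and w w' :: "'p sym set list" and g :: "nat \<Rightarrow> nat"
  assumes finK: "finite K"
    and tyseq: "is_type \<Sigma> K seq"
    and alph: "set w \<subseteq> alphabet \<Sigma> K"
    and len: "length w' = length w"
    and g0: "g 0 = 1"
    and gn: "g (length w) = Suc (length seq)"
    and stp: "\<forall>j<length w. step_ok \<Sigma> K seq (w ! j) (w' ! j) (g j) (g (Suc j))"
    and coll: "collapsed_iword \<Sigma> K w'"
begin

definition R where "R = {j. j < length w \<and> g (Suc j) = Suc (g j)}"
definition c where "c j = seq ! (g j - 1)"
definition P where "P I = {j \<in> R. c j = Itv I}"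

lemma Rfacts: "j \<in> R \<Longrightarrow> j < length w \<and> 1 \<le> g j \<and> g j \<le> length seq \<and> c j \<in> w ! j \<and> w' ! j = w ! j"
  using stp unfolding R_def c_def step_ok_def by auto

lemma nRfacts: "j < length w \<Longrightarrow> j \<notin> R \<Longrightarrow> w ! j \<subseteq> Prop ` \<Sigma> \<and> g (Suc j) = g j \<and>
    (w' ! j = w ! j \<or> (\<exists>I'\<in>K_i K seq (g j). w' ! j = w ! j \<union> {Itv I'}))"
  using stp unfolding R_def step_ok_def by auto

lemma gstep: "j < length w \<Longrightarrow> g (Suc j) = g j \<or> g (Suc j) = Suc (g j)"
  using stp unfolding step_ok_def by auto

lemma gmono: "j \<le> k \<Longrightarrow> k \<le> length w \<Longrightarrow> g j \<le> g k"
proof (induction k)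
  case 0 thus ?case by simp
next
  case (Suc k) show ?case
  proof (cases "j = Suc k")
    case True thus ?thesis by simp
  next
    case False then have "j \<le> k" using Suc.prems by simp
    then have "g j \<le> g k" using Suc by simp
    moreover have "g k \<le> g (Suc k)" using gstep[of k] Suc.prems by auto
    ultimately show ?thesis by simp
  qed
qed

lemma ivt: "a \<le> b \<Longrightarrow> b \<le> length w \<Longrightarrow> g a \<le> v \<Longrightarrow> v < g b \<Longrightarrow>
    \<exists>p. a \<le> p \<and> p < b \<and> g p = v \<and> g (Suc p) = Suc v"
proof (induction b)
  case 0 thus ?case by simp
next
  case (Suc b)
  have "a \<noteq> Suc b" using Suc.prems by auto
  then have ab: "a \<le> b" using Suc.prems by simp
  show ?case
  proof (cases "v < g b")
    case True
    then obtain p where "a \<le> p \<and> p < b \<and> g p = v \<and> g (Suc p) = Suc v"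
      using Suc.IH[OF ab _ Suc.prems(3) True] Suc.prems(2) by auto
    then show ?thesis by (intro exI[of _ p]) auto
  next
    case False
    have "g (Suc b) \<le> Suc (g b)" using gstep[of b] Suc.prems by auto
    then have "g b = v" "g (Suc b) = Suc v" using False Suc.prems by auto
    then show ?thesis using ab by (intro exI[of _ b]) auto
  qed
qed

lemma R_strict: "j \<in> R \<Longrightarrow> k \<in> R \<Longrightarrow> j < k \<Longrightarrow> g j < g k"
proof -
  assume a: "j \<in> R" "k \<in> R" "j < k"
  have "g (Suc j) \<le> g k" using a Rfacts[of k] by (intro gmono) auto
  then show "g j < g k" using a(1) unfolding R_def by simp
qed

lemma c_cases: "j \<in> R \<Longrightarrow> c j = Anch \<or> (\<exists>I\<in>K. c j = Itv I)"
proof -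
  assume a: "j \<in> R"
  have "1 \<le> g j" "g j \<le> length seq" using Rfacts[OF a] by auto
  then have "g j - 1 < length seq" by linarith
  then have "c j \<in> set seq" unfolding c_def by simp
  then show ?thesis using type_set[OF tyseq finK] by auto
qed

lemma R_itv: "j \<in> R \<Longrightarrow> I \<in> K \<Longrightarrow> Itv I \<in> w' ! j \<Longrightarrow> c j = Itv I"
proof -
  assume a: "j \<in> R" "I \<in> K" "Itv I \<in> w' ! j"
  have j: "j < length w'" "c j \<in> w' ! j" using Rfacts[OF a(1)] len by auto
  have iI: "Itv I \<in> w' ! j - Prop ` \<Sigma>" using a(3) by auto
  from c_cases[OF a(1)] show ?thesis
  proof
    assume "c j = Anch"
    then have "w' ! j - Prop ` \<Sigma> = {Anch}" using letter_anch[OF coll j(1)] j(2) by simp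
    then show ?thesis using iI by auto
  next
    assume "\<exists>J\<in>K. c j = Itv J"
    then obtain J where J: "J \<in> K" "c j = Itv J" by blast
    then have "w' ! j - Prop ` \<Sigma> = {Itv J}" using letter_itv[OF coll j(1) _ J(1) finK] j(2) by simp
    then show ?thesis using iI J by auto
  qed
qed

lemma P_finite: "finite (P I)"
proof -
  have "P I \<subseteq> {..<length w}" unfolding P_def R_def by auto
  then show ?thesis using finite_subset by blast
qed

lemma P_card: "card (P I) \<le> 2"
proof -
  have inj: "inj_on (\<lambda>j. g j - 1) (P I)"
  proof (rule inj_onI)
    fix j k assume jk: "j \<in> P I" "k \<in> P I" "g j - 1 = g k - 1"
    then have "g j = g k" using Rfacts[of j] Rfacts[of k] unfolding P_def by auto
    then show "j = k" using R_strict[of j k] R_strict[of k j] jk unfolding P_def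
      by (metis (no_types, lifting) linorder_neq_iff mem_Collect_eq less_irrefl)
  qed
  have img: "(\<lambda>j. g j - 1) ` P I \<subseteq> {i. i < length seq \<and> seq ! i = Itv I}"
    using Rfacts unfolding P_def c_def by force
  have "card (P I) \<le> card {i. i < length seq \<and> seq ! i = Itv I}"
    by (rule card_inj_on_le[OF inj img]) simp
  also have "\<dots> \<le> 2" using type_card[OF tyseq finK] .
  finally show ?thesis .
qed

lemma P_sub: "P I \<subseteq> restricted w' I"
  using Rfacts len unfolding P_def restricted_def by force

lemma inserted:
  assumes I: "I \<in> K" and jS: "j \<in> restricted w' I" and jP: "j \<notin> P I"
  shows "(\<exists>p1\<in>P I. p1 < j) \<and> (\<exists>p2\<in>P I. j < p2)"
proof -
  have j: "j < length w" "Itv I \<in> w' ! j" using jS len unfolding restricted_def by auto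
  have jR: "j \<notin> R" using R_itv[OF _ I j(2)] jP unfolding P_def by auto
  note nR = nRfacts[OF j(1) jR]
  have "Itv I \<notin> w ! j" using nR by auto
  then obtain I' where I': "I' \<in> K_i K seq (g j)" "w' ! j = w ! j \<union> {Itv I'}" using nR j(2) by auto
  then have "I' = I" using j(2) \<open>Itv I \<notin> w ! j\<close> by auto
  with I' obtain i' i'' where ii: "1 \<le> i'" "i' < g j" "g j \<le> i''" "i'' \<le> length seq"
    "seq ! (i' - 1) = Itv I" "seq ! (i'' - 1) = Itv I"
    unfolding K_i_def by blast
  obtain p1 where p1: "p1 < j" "g p1 = i'" "g (Suc p1) = Suc i'"
    using ivt[of 0 j i'] ii g0 j(1) by auto
  have "p1 \<in> P I" using p1 ii j(1) unfolding P_def R_def c_def by auto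
  moreover obtain p2 where p2: "j \<le> p2" "p2 < length w" "g p2 = i''" "g (Suc p2) = Suc i''"
    using ivt[of j "length w" i''] ii gn j(1) by auto
  have "p2 \<noteq> j" using p2 nR ii by auto
  then have "j < p2" using p2 by auto
  moreover have "p2 \<in> P I" using p2 ii unfolding P_def R_def c_def by auto
  ultimately show ?thesis using p1 by blast
qed

lemma Min_P: "I \<in> K \<Longrightarrow> restricted w' I \<noteq> {} \<Longrightarrow> Min (restricted w' I) \<in> P I"
proof (rule ccontr)
  assume a: "I \<in> K" "restricted w' I \<noteq> {}" "Min (restricted w' I) \<notin> P I"
  have m: "Min (restricted w' I) \<in> restricted w' I" using a(2) restricted_finite Min_in by blast
  obtain p1 where "p1 \<in> P I" "p1 < Min (restricted w' I)" using inserted[OF a(1) m a(3)] by blast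
  then show False using P_sub restricted_finite Min_le by (metis leD subsetD)
qed

lemma Max_P: "I \<in> K \<Longrightarrow> restricted w' I \<noteq> {} \<Longrightarrow> Max (restricted w' I) \<in> P I"
proof (rule ccontr)
  assume a: "I \<in> K" "restricted w' I \<noteq> {}" "Max (restricted w' I) \<notin> P I"
  have m: "Max (restricted w' I) \<in> restricted w' I" using a(2) restricted_finite Max_in by blast
  obtain p2 where "p2 \<in> P I" "Max (restricted w' I) < p2" using inserted[OF a(1) m a(3)] by blast
  then show False using P_sub restricted_finite Max_ge by (metis leD subsetD)
qed

lemma first_last_iff:
  assumes I: "I \<in> K"
  shows "(first_pos w' I = Some j \<or> last_pos w' I = Some j) \<longleftrightarrow> j \<in> P I"
proof
  assume "first_pos w' I = Some j \<or> last_pos w' I = Some j"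
  then show "j \<in> P I" using Min_P[OF I] Max_P[OF I] unfolding first_pos_def last_pos_def
    by (auto split: if_splits)
next
  assume jP: "j \<in> P I"
  let ?S = "restricted w' I"
  have jS: "j \<in> ?S" using jP P_sub by blast
  then have ne: "?S \<noteq> {}" by blast
  have le: "Min ?S \<le> j" "j \<le> Max ?S"
    using Min_le[OF restricted_finite jS] Max_ge[OF restricted_finite jS] by auto
  have "j = Min ?S \<or> j = Max ?S"
  proof (rule ccontr)
    assume "\<not> (j = Min ?S \<or> j = Max ?S)"
    then have lt: "Min ?S < j" "j < Max ?S" using le by auto
    have "{Min ?S, j, Max ?S} \<subseteq> P I" using Min_P[OF I ne] Max_P[OF I ne] jP by blast
    then have "card {Min ?S, j, Max ?S} \<le> card (P I)" using P_finite card_mono by blast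
    moreover have "card {Min ?S, j, Max ?S} = 3" using lt by auto
    ultimately show False using P_card[of I] by simp
  qed
  then show "first_pos w' I = Some j \<or> last_pos w' I = Some j"
    using ne unfolding first_pos_def last_pos_def by auto
qed

lemma Norm_eq: "Norm \<Sigma> K w' = w"
proof (rule nth_equalityI)
  show "length (Norm \<Sigma> K w') = length w" unfolding Norm_def using len by simp
next
  fix j assume "j < length (Norm \<Sigma> K w')"
  then have j: "j < length w" unfolding Norm_def using len by simp
  have set_eq: "{Itv I | I. I \<in> K \<and> (first_pos w' I = Some j \<or> last_pos w' I = Some j)}
      = {Itv I | I. I \<in> K \<and> j \<in> P I}" using first_last_iff by blast
  have A: "w' ! j \<inter> (Prop ` \<Sigma> \<union> {Anch}) = w ! j \<inter> (Prop ` \<Sigma> \<union> {Anch})"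
  proof (cases "j \<in> R")
    case True then show ?thesis using Rfacts by simp
  next
    case False then show ?thesis using nRfacts[OF j False] by auto
  qed
  have B: "{Itv I | I. I \<in> K \<and> j \<in> P I} = w ! j \<inter> Itv ` K"
  proof
    show "{Itv I | I. I \<in> K \<and> j \<in> P I} \<subseteq> w ! j \<inter> Itv ` K"
      using Rfacts unfolding P_def by force
  next
    show "w ! j \<inter> Itv ` K \<subseteq> {Itv I | I. I \<in> K \<and> j \<in> P I}"
    proof
      fix x assume x: "x \<in> w ! j \<inter> Itv ` K"
      then obtain I where I: "I \<in> K" "x = Itv I" "Itv I \<in> w ! j" by blast
      have jR: "j \<in> R"
      proof (rule ccontr)
        assume "j \<notin> R" then show False using nRfacts[OF j] I by auto
      qed
      then have "Itv I \<in> w' ! j" using Rfacts I by simp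
      then have "c j = Itv I" using R_itv[OF jR I(1)] by simp
      then show "x \<in> {Itv I | I. I \<in> K \<and> j \<in> P I}" using jR I unfolding P_def by blast
    qed
  qed
  have C: "w ! j \<subseteq> Prop ` \<Sigma> \<union> Itv ` K \<union> {Anch}"
    using alph j nth_mem unfolding alphabet_def by blast
  have "Norm \<Sigma> K w' ! j = (w' ! j \<inter> (Prop ` \<Sigma> \<union> {Anch})) \<union>
        {Itv I | I. I \<in> K \<and> (first_pos w' I = Some j \<or> last_pos w' I = Some j)}"
    unfolding Norm_def using j len by simp
  also have "\<dots> = w ! j" unfolding set_eq A B using C by blast
  finally show "Norm \<Sigma> K w' ! j = w ! j" .
qed

lemma R_finite: "finite R"
proof -
  have "R \<subseteq> {..<length w}" unfolding R_def by auto
  then show ?thesis using finite_subset by blast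
qed

lemma letter_R: "p \<in> R \<Longrightarrow> the_elem (w' ! p - Prop ` \<Sigma>) = c p"
proof -
  assume a: "p \<in> R"
  have j: "p < length w'" "c p \<in> w' ! p" using Rfacts[OF a] len by auto
  from c_cases[OF a] show ?thesis
  proof
    assume "c p = Anch"
    then show ?thesis using letter_anch[OF coll j(1)] j(2) by simp
  next
    assume "\<exists>J\<in>K. c p = Itv J"
    then obtain J where J: "J \<in> K" "c p = Itv J" by blast
    then show ?thesis using letter_itv[OF coll j(1) _ J(1) finK] j(2) by simp
  qed
qed

lemma Boundary_eq: "Boundary K w' = R"
proof
  show "Boundary K w' \<subseteq> R"
  proof
    fix x assume "x \<in> Boundary K w'"
    then consider "x = anch_pos w'" | I where "I \<in> K" "first_pos w' I = Some x \<or> last_pos w' I = Some x"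
      unfolding Boundary_def by blast
    then show "x \<in> R"
    proof cases
      case 1
      have iw: "interval_word \<Sigma> K w'" using coll unfolding collapsed_iword_def by blast
      have a: "x < length w" "Anch \<in> w' ! x" using anch_pos_props[OF iw] 1 len by auto
      show ?thesis
      proof (rule ccontr)
        assume "x \<notin> R"
        then show False using nRfacts[OF a(1)] a(2) by auto
      qed
    next
      case 2
      then show ?thesis using first_last_iff[of I x] unfolding P_def by blast
    qed
  qed
next
  show "R \<subseteq> Boundary K w'"
  proof
    fix j assume jR: "j \<in> R"
    from c_cases[OF jR] show "j \<in> Boundary K w'"
    proof
      assume "c j = Anch"
      then have "Anch \<in> w' ! j" "j < length w'" using Rfacts[OF jR] len by auto
      then have "j = anch_pos w'" using anch_pos_unique coll unfolding collapsed_iword_def by blast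
      then show ?thesis unfolding Boundary_def by blast
    next
      assume "\<exists>J\<in>K. c j = Itv J"
      then obtain J where J: "J \<in> K" "c j = Itv J" by blast
      then have "j \<in> P J" using jR unfolding P_def by blast
      then show ?thesis using first_last_iff[OF J(1)] J(1) unfolding Boundary_def by blast
    qed
  qed
qed

lemma type_eq: "type_of \<Sigma> K w' = seq"
proof -
  define L where "L = sorted_list_of_set R"
  have sL: "set L = R" "sorted_wrt (<) L" using R_finite unfolding L_def by auto
  have sg: "sorted_wrt (<) (map g L)"
    unfolding sorted_wrt_map
    by (rule sorted_wrt_mono_rel[OF _ sL(2)]) (use R_strict sL(1) in blast)
  have gR: "g ` R = {1..<Suc (length seq)}"
  proof
    show "g ` R \<subseteq> {1..<Suc (length seq)}" using Rfacts by force
  next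
    show "{1..<Suc (length seq)} \<subseteq> g ` R"
    proof
      fix v assume "v \<in> {1..<Suc (length seq)}"
      then obtain p where p: "p < length w" "g p = v" "g (Suc p) = Suc v"
        using ivt[of 0 "length w" v] g0 gn by auto
      then have "p \<in> R" unfolding R_def by simp
      then show "v \<in> g ` R" using p by blast
    qed
  qed
  have st: "set (map g L) = set [1..<Suc (length seq)]" by (simp only: set_map sL(1) set_upt gR)
  have gL: "map g L = [1..<Suc (length seq)]"
    by (rule sorted_distinct_set_unique) (use sg st in \<open>simp_all add: strict_sorted_iff del: upt_Suc\<close>)
  have "type_of \<Sigma> K w' = map (\<lambda>p. the_elem (w' ! p - Prop ` \<Sigma>)) L"
    unfolding type_of_def Boundary_eq L_def by simp
  also have "\<dots> = map c L" using letter_R sL(1) by auto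
  also have "\<dots> = map (\<lambda>i. seq ! (i - 1)) (map g L)" unfolding c_def by simp
  also have "\<dots> = seq" unfolding gL by (rule nth_equalityI) (simp_all del: upt_Suc)
  finally show ?thesis .
qed

end

theorem proposition3:
  fixes \<Sigma> :: "'p set" and K :: "real set set"
    and Q :: "'q set" and init :: 'q and \<delta> :: "'q \<Rightarrow> 'p sym set \<Rightarrow> 'q set" and F :: "'q set"
    and seq :: "'p sym list"
  assumes "finite \<Sigma>"
    and "finite K" and "K \<subseteq> I_int"
    and "nfa Q init (alphabet \<Sigma> K) \<delta> F"
    and "nfa_lang init (alphabet \<Sigma> K) \<delta> F \<subseteq> {w. collapsed_iword \<Sigma> K w}"
    and "is_type \<Sigma> K seq"
  shows "nfa_lang (init, 1) (alphabet \<Sigma> K) (delta_seq \<Sigma> K seq \<delta>) (F \<times> {length seq + 1})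
           \<subseteq> Norm \<Sigma> K ` W_seq \<Sigma> K seq"
proof
  fix x assume x: "x \<in> nfa_lang (init, 1) (alphabet \<Sigma> K) (delta_seq \<Sigma> K seq \<delta>) (F \<times> {length seq + 1})"
  then have xa: "set x \<subseteq> alphabet \<Sigma> K" unfolding nfa_lang_def by blast
  from x obtain qf where qf: "qf \<in> F" "(qf, Suc (length seq)) \<in> steps (delta_seq \<Sigma> K seq \<delta>) {(init, 1)} x"
    unfolding nfa_lang_def by auto
  obtain w' g where r: "length w' = length x" "qf \<in> steps \<delta> {init} w'" "g 0 = 1"
    "g (length x) = Suc (length seq)"
    "\<forall>j<length x. step_ok \<Sigma> K seq (x ! j) (w' ! j) (g j) (g (Suc j))"
    using run_lemma[OF qf(2)] by blast
  have "set w' \<subseteq> alphabet \<Sigma> K"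
  proof
    fix y assume "y \<in> set w'"
    then obtain j where j: "j < length x" "y = w' ! j" using r(1) by (auto simp: in_set_conv_nth)
    have xj: "x ! j \<in> alphabet \<Sigma> K" using xa j(1) nth_mem by blast
    have kk: "K_i K seq (g j) \<subseteq> K" unfolding K_i_def by blast
    moreover have "step_ok \<Sigma> K seq (x ! j) (w' ! j) (g j) (g (Suc j))" using r(5) j(1) by blast
    then have "w' ! j = x ! j \<or> (\<exists>I'\<in>K_i K seq (g j). w' ! j = x ! j \<union> {Itv I'})"
      unfolding step_ok_def by auto
    ultimately show "y \<in> alphabet \<Sigma> K" using j(2) xj kk unfolding alphabet_def Pow_iff by blast
  qed
  then have "w' \<in> nfa_lang init (alphabet \<Sigma> K) \<delta> F" using r(2) qf(1) unfolding nfa_lang_def by auto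
  then have coll: "collapsed_iword \<Sigma> K w'" using assms(5) by blast
  interpret run_setting \<Sigma> K seq x w' g
    using assms(2,6) xa r(1,3,4,5) coll by unfold_locales
  have "w' \<in> W_seq \<Sigma> K seq" using coll type_eq unfolding W_seq_def by blast
  then show "x \<in> Norm \<Sigma> K ` W_seq \<Sigma> K seq" using Norm_eq by force
qed

end
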